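(* For every integer $n\ge1$, \[ \sum_{k=1}^{n}2^{k-1}\omega(n-k)=\sum_{\substack{m+k=n\\ m\ge1,\ k\ge0}}c_\psi(m)\,\Omega_m(k). \]
   Context: A composition of $n$ is an ordered sequence $(a_1,\dots,a_r)$ of positive integers with $a_1+\dots+a_r=n$; it is relatively prime if $\gcd(a_1,\dots,a_r)=1$. $c_\psi(n)$ is the number of relatively prime compositions of $n$. $\omega:\mathbb{Z}\to\mathbb{Z}$ is defined by $\omega(0)=1$; $\omega(m)=(-1)^j$ if $m=\frac{3j^2\pm j}{2}$ for some integer $j\ge1$; $\omega(m)=0$ otherwise (in particular for $m<0$). For $m\ge1$ and integer $k$, $\Omega_m(k)=\sum_{j\ge0}\omega(k-jm)=\omega(k)+\omega(k-m)+\omega(k-2m)+\cdots$. *)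

theory Defs
  imports Main
begin

definition compositions :: "nat \<Rightarrow> nat list set" where
  "compositions n = {xs. (\<forall>a\<in>set xs. a > 0) \<and> sum_list xs = n}"

definition c_psi :: "nat \<Rightarrow> nat" where
  "c_psi n = card {xs \<in> compositions n. Gcd (set xs) = 1}"

definition pent :: "int \<Rightarrow> int \<Rightarrow> bool" where
  "pent m j \<longleftrightarrow> j \<ge> 1 \<and> (2 * m = 3 * j^2 + j \<or> 2 * m = 3 * j^2 - j)"

definition omega :: "int \<Rightarrow> int" where
  "omega m = (if m = 0 then 1
              else if (\<exists>j. pent m j) then (-1) ^ nat (THE j. pent m j)
              else 0)"

(* Omega_m(k) = sum_{j>=0} omega(k - j m); the terms with j > k (indeed with k - j m < 0)
   vanish since m >= 1, so the sum over j = 0..k (for k >= 0) is the full series. *)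
definition Omega :: "nat \<Rightarrow> int \<Rightarrow> int" where
  "Omega m k = (\<Sum>j=0..nat k. omega (k - int j * int m))"

end

theory Submission
  imports Defs
begin

lemma omega_neg: "m < 0 \<Longrightarrow> omega m = 0"
  unfolding omega_def pent_def
proof -
  assume "m < 0"
  have "\<not> (\<exists>j. j \<ge> 1 \<and> (2 * m = 3 * j^2 + j \<or> 2 * m = 3 * j^2 - j))"
  proof
    assume "\<exists>j. j \<ge> 1 \<and> (2 * m = 3 * j^2 + j \<or> 2 * m = 3 * j^2 - j)"
    then obtain j :: int where j: "j \<ge> 1" "2 * m = 3 * j^2 + j \<or> 2 * m = 3 * j^2 - j" by blast
    have "j^2 \<ge> j" using j(1) by (simp add: power2_eq_square)
    then show False using j \<open>m < 0\<close> by auto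
  qed
  then show "(if m = 0 then 1 else if \<exists>j. 1 \<le> j \<and> (2 * m = 3 * j\<^sup>2 + j \<or> 2 * m = 3 * j\<^sup>2 - j)
     then (- 1) ^ nat (THE j. 1 \<le> j \<and> (2 * m = 3 * j\<^sup>2 + j \<or> 2 * m = 3 * j\<^sup>2 - j)) else 0) = 0"
    using \<open>m < 0\<close> by auto
qed

lemma length_le_sum: "\<forall>a\<in>set xs. a > (0::nat) \<Longrightarrow> length xs \<le> sum_list xs"
  by (induction xs) auto

lemma finite_compositions: "finite (compositions n)"
proof -
  have "compositions n \<subseteq> {xs. set xs \<subseteq> {0..n} \<and> length xs \<le> n}"
    unfolding compositions_def using length_le_sum member_le_sum_list by fastforce
  moreover have "finite {xs. set xs \<subseteq> {0..n} \<and> length xs \<le> n}"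
    by (rule finite_lists_length_le) auto
  ultimately show ?thesis by (rule finite_subset)
qed

lemma compositions_0: "compositions 0 = {[]}"
proof -
  have "xs = []" if "\<forall>a\<in>set xs. a > (0::nat)" "sum_list xs = 0" for xs
    using that by (cases xs) auto
  then show ?thesis unfolding compositions_def by auto
qed

lemma compositions_pos:
  assumes "n \<ge> 1"
  shows "compositions n = (\<Union>a\<in>{1..n}. (Cons a) ` compositions (n - a))"
proof
  show "compositions n \<subseteq> (\<Union>a\<in>{1..n}. (Cons a) ` compositions (n - a))"
  proof
    fix xs assume xs: "xs \<in> compositions n"
    then obtain a ys where "xs = a # ys" using assms unfolding compositions_def
      by (cases xs) auto
    then have "a \<in> {1..n}" "ys \<in> compositions (n - a)"
      using xs unfolding compositions_def by auto
    then show "xs \<in> (\<Union>a\<in>{1..n}. (Cons a) ` compositions (n - a))"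
      using \<open>xs = a # ys\<close> by blast
  qed
  show "(\<Union>a\<in>{1..n}. (Cons a) ` compositions (n - a)) \<subseteq> compositions n"
    unfolding compositions_def by auto
qed

lemma card_compositions_rec:
  assumes "n \<ge> 1"
  shows "card (compositions n) = (\<Sum>k<n. card (compositions k))"
proof -
  have "card (compositions n) = (\<Sum>a\<in>{1..n}. card ((Cons a) ` compositions (n - a)))"
    unfolding compositions_pos[OF assms]
    by (rule card_UN_disjoint) (auto simp: finite_compositions)
  also have "\<dots> = (\<Sum>a\<in>{1..n}. card (compositions (n - a)))"
    by (rule sum.cong) (auto simp: card_image)
  also have "\<dots> = (\<Sum>k<n. card (compositions k))"
    by (rule sum.reindex_bij_witness[where i="\<lambda>k. n - k" and j="\<lambda>a. n - a"]) auto
  finally show ?thesis .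
qed

lemma card_compositions: "n \<ge> 1 \<Longrightarrow> card (compositions n) = 2 ^ (n - 1)"
proof (induction n)
  case 0 then show ?case by simp
next
  case (Suc n)
  show ?case
  proof (cases "n = 0")
    case True
    then show ?thesis using card_compositions_rec[of 1] by (simp add: compositions_0)
  next
    case False
    then have "card (compositions (Suc n)) = card (compositions n) + (\<Sum>k<n. card (compositions k))"
      using card_compositions_rec[of "Suc n"] by simp
    also have "\<dots> = 2 * card (compositions n)"
      using card_compositions_rec[of n] False by simp
    finally show ?thesis using Suc False
      by (cases n) auto
  qed
qed

lemma dvd_sum_list_all: "(\<forall>x\<in>set xs. (d::nat) dvd x) \<Longrightarrow> d dvd sum_list xs"
  by (induction xs) auto

lemma divdiv: "a dvd (i::nat) \<Longrightarrow> i \<ge> 1 \<Longrightarrow> i div (i div a) = a \<and> i div a dvd i"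
proof -
  assume "a dvd i" "i \<ge> 1"
  then obtain e where e: "i = a * e" by blast
  then have "a > 0" "e > 0" using \<open>i \<ge> 1\<close> by auto
  then show ?thesis using e by simp
qed

lemma gcd_class:
  assumes "d dvd i" "i \<ge> 1"
  shows "card {xs \<in> compositions i. Gcd (set xs) = d} = c_psi (i div d)"
proof -
  have d: "d > 0" using assms by (metis dvd_0_left_iff gr0I not_one_le_zero)
  obtain e where e: "i = d * e" using assms by blast
  have ie: "i div d = e" using d e by simp
  let ?A = "{ys \<in> compositions e. Gcd (set ys) = 1}"
  have img: "map ((*) d) ` ?A = {xs \<in> compositions i. Gcd (set xs) = d}"
  proof
    show "map ((*) d) ` ?A \<subseteq> {xs \<in> compositions i. Gcd (set xs) = d}"
    proof
      fix xs assume "xs \<in> map ((*) d) ` ?A"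
      then obtain ys where ys: "ys \<in> ?A" "xs = map ((*) d) ys" by blast
      have "sum_list xs = d * sum_list ys" using ys(2)
        by (simp add: sum_list_const_mult)
      moreover have "Gcd (set xs) = d" using ys Gcd_mult[of d "set ys"] by simp
      ultimately show "xs \<in> {xs \<in> compositions i. Gcd (set xs) = d}"
        using ys d e unfolding compositions_def by auto
    qed
    show "{xs \<in> compositions i. Gcd (set xs) = d} \<subseteq> map ((*) d) ` ?A"
    proof
      fix xs assume xs: "xs \<in> {xs \<in> compositions i. Gcd (set xs) = d}"
      have dv: "\<forall>x\<in>set xs. d dvd x" using xs by (metis (mono_tags, lifting) Gcd_dvd mem_Collect_eq)
      define ys where "ys = map (\<lambda>x. x div d) xs"
      have xy: "xs = map ((*) d) ys" unfolding ys_def using dv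
        by (simp add: map_idI)
      have "d * sum_list ys = d * e" using xs xy e unfolding compositions_def
        by (simp add: sum_list_const_mult)
      then have "sum_list ys = e" using d by simp
      moreover have "\<forall>a\<in>set ys. a > 0" using xs xy d unfolding compositions_def by auto
      moreover have "d * Gcd (set ys) = d * 1" using xs xy Gcd_mult[of d "set ys"] by simp
      then have "Gcd (set ys) = 1" using d by simp
      ultimately have "ys \<in> ?A" unfolding compositions_def by auto
      then show "xs \<in> map ((*) d) ` ?A" using xy by blast
    qed
  qed
  have "inj_on (map ((*) d)) ?A"
    using d by (auto simp: inj_on_def list.inj_map_strong)
  then have "card (map ((*) d) ` ?A) = card ?A" by (rule card_image)
  then show ?thesis using img ie unfolding c_psi_def by simp
qed

lemma sum_c_psi:
  assumes "i \<ge> 1"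
  shows "(\<Sum>m | m dvd i. c_psi m) = 2 ^ (i - 1)"
proof -
  have fin: "finite {d. d dvd i}" using assms by simp
  have "compositions i = (\<Union>d\<in>{d. d dvd i}. {xs \<in> compositions i. Gcd (set xs) = d})"
  proof -
    have "Gcd (set xs) dvd i" if "xs \<in> compositions i" for xs
      using that unfolding compositions_def
      using dvd_sum_list_all[of xs "Gcd (set xs)"] by (auto intro: Gcd_dvd)
    then show ?thesis by blast
  qed
  moreover have "card (\<Union>d\<in>{d. d dvd i}. {xs \<in> compositions i. Gcd (set xs) = d})
     = (\<Sum>d | d dvd i. card {xs \<in> compositions i. Gcd (set xs) = d})"
    using fin by (intro card_UN_disjoint) (auto simp: finite_compositions)
  ultimately have "card (compositions i) = (\<Sum>d | d dvd i. card {xs \<in> compositions i. Gcd (set xs) = d})"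
    by simp
  also have "\<dots> = (\<Sum>d | d dvd i. c_psi (i div d))"
    using gcd_class assms by (intro sum.cong) auto
  also have "\<dots> = (\<Sum>m | m dvd i. c_psi m)"
    by (rule sum.reindex_bij_witness[where i="\<lambda>m. i div m" and j="\<lambda>d. i div d"])
      (use assms in \<open>simp_all add: divdiv\<close>)
  finally show ?thesis using card_compositions assms by simp
qed

lemma Omega_eq:
  assumes "1 \<le> m" "m \<le> n"
  shows "Omega m (int n - int m) = (\<Sum>i\<in>{i\<in>{1..n}. m dvd i}. omega (int n - int i))"
proof -
  define f where "f i = omega (int n - int i)" for i
  have "Omega m (int n - int m) = (\<Sum>j=0..n-m. f ((j+1)*m))"
    unfolding Omega_def f_def using assms
    by (intro sum.cong) (auto simp: nat_diff_distrib algebra_simps)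
  also have "\<dots> = (\<Sum>i\<in>(\<lambda>j. (j+1)*m) ` {0..n-m}. f i)"
    by (rule sum.reindex[symmetric, unfolded comp_def]) (use assms in \<open>auto simp: inj_on_def\<close>)
  also have "\<dots> = (\<Sum>i\<in>{i\<in>{1..n}. m dvd i}. f i)"
  proof (rule sum.mono_neutral_right)
    show "{i \<in> {1..n}. m dvd i} \<subseteq> (\<lambda>j. (j + 1) * m) ` {0..n - m}"
    proof
      fix i assume i: "i \<in> {i \<in> {1..n}. m dvd i}"
      then obtain q where q: "i = m * q" by auto
      have "q \<ge> 1" using i q by (cases q) auto
      have "q * 1 \<le> q * m" using assms by simp
      have "(q-1)*1 \<le> (q-1)*m" using assms by (intro mult_le_mono2) simp
      moreover have "(q-1)*m = m*q - m" by (simp add: diff_mult_distrib algebra_simps)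
      moreover have "m*q \<le> n" using i q by simp
      ultimately have "q - 1 \<le> n - m" by arith
      then show "i \<in> (\<lambda>j. (j + 1) * m) ` {0..n - m}"
        using q \<open>q \<ge> 1\<close> by (intro image_eqI[of _ _ "q - 1"]) (auto simp: algebra_simps)
    qed
    show "\<forall>i\<in>(\<lambda>j. (j + 1) * m) ` {0..n - m} - {i \<in> {1..n}. m dvd i}. f i = 0"
    proof
      fix i assume "i \<in> (\<lambda>j. (j + 1) * m) ` {0..n - m} - {i \<in> {1..n}. m dvd i}"
      then have "i > n" using assms by auto
      then show "f i = 0" unfolding f_def by (simp add: omega_neg)
    qed
  qed simp
  finally show ?thesis unfolding f_def .
qed

theorem mainTheorem10:
  fixes n :: nat
  assumes "n \<ge> 1"
  shows "(\<Sum>k=1..n. 2 ^ (k - 1) * omega (int n - int k))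
       = (\<Sum>m=1..n. int (c_psi m) * Omega m (int n - int m))"
proof -
  define f where "f i = omega (int n - int i)" for i
  have "(\<Sum>m=1..n. int (c_psi m) * Omega m (int n - int m))
      = (\<Sum>m=1..n. \<Sum>i=1..n. if m dvd i then int (c_psi m) * f i else 0)"
  proof (intro sum.cong refl)
    fix m assume m: "m \<in> {1..n}"
    have "Omega m (int n - int m) = sum f {i\<in>{1..n}. m dvd i}"
      using Omega_eq[of m n] m unfolding f_def by simp
    then show "int (c_psi m) * Omega m (int n - int m) = (\<Sum>i=1..n. if m dvd i then int (c_psi m) * f i else 0)"
      by (simp only: sum_distrib_left sum.inter_filter[OF finite_atLeastAtMost]) (intro sum.cong refl, simp)
  qed
  also have "\<dots> = (\<Sum>i=1..n. \<Sum>m=1..n. if m dvd i then int (c_psi m) * f i else 0)"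
    by (rule sum.swap)
  also have "\<dots> = (\<Sum>i=1..n. int (\<Sum>m | m dvd i. c_psi m) * f i)"
  proof (intro sum.cong refl)
    fix i assume i: "i \<in> {1..n}"
    have "{m \<in> {1..n}. m dvd i} = {m. m dvd i}"
      using i by (auto dest: dvd_imp_le)
    then have "(\<Sum>m=1..n. if m dvd i then int (c_psi m) * f i else 0)
        = (\<Sum>m | m dvd i. int (c_psi m) * f i)"
      by (simp add: sum.inter_filter[symmetric])
    then show "(\<Sum>m=1..n. if m dvd i then int (c_psi m) * f i else 0) = int (\<Sum>m | m dvd i. c_psi m) * f i"
      by (simp add: sum_distrib_right)
  qed
  also have "\<dots> = (\<Sum>k=1..n. 2 ^ (k - 1) * omega (int n - int k))"
    by (intro sum.cong refl) (simp add: sum_c_psi f_def)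
  finally show ?thesis ..
qed
end
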